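(* There exists an absolute constant $U>0$ such that for every member $S_l$ of the degenerating family, every $z\in H$ with $\operatorname{Im} z<1$ and every $t\ge 0$, $$\Pi_l(z,t)\le U e^{t}.$$
   Context: Let $\{S_l\}$ be a degenerating family of hyperbolic Riemann surfaces of genus $g$ with one puncture, parametrized by $l$ near $0\in\mathbf{R}^{6g-4}$. For each $l$, $\Gamma_l$ is a Fuchsian group with $S_l\simeq H/\Gamma_l$, where $H=\{z\in\mathbf C:\operatorname{Im} z>0\}$ carries the hyperbolic metric with distance $d(\cdot,\cdot)$; $\Gamma_l$ is normalized so that it contains the parabolic element $z\mapsto z+1$, and $\Gamma_\infty$ denotes the cyclic group generated by it. For $z\in H$ and a class $[\delta]\in\Gamma_\infty\backslash\Gamma_l$, the canonical representative $\hat\delta=\hat\delta(z,[\delta])$ is the unique element of $[\delta]$ with $-\tfrac12\le \operatorname{Re}\hat\delta z<\tfrac12$. For $z$ with $\operatorname{Im} z<1$ define $\Pi_l(z,t)=\#\{[\delta]\in\Gamma_\infty\backslash\Gamma_l : d(i,\hat\delta z)\le t\}$. *)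

theory Defs
  imports "HOL-Analysis.Analysis"
begin

text \<open>Real 2x2 matrices (a,b,c,d) standing for [[a,b],[c,d]]; a Fuchsian group is
  represented by its (full, sign-closed) preimage in SL(2,R).\<close>

type_synonym mat2 = "real \<times> real \<times> real \<times> real"

definition mmult :: "mat2 \<Rightarrow> mat2 \<Rightarrow> mat2" where
  "mmult A B = (case A of (a,b,c,d) \<Rightarrow> case B of (a',b',c',d') \<Rightarrow>
     (a*a' + b*c', a*b' + b*d', c*a' + d*c', c*b' + d*d'))"

definition mneg :: "mat2 \<Rightarrow> mat2" where
  "mneg A = (case A of (a,b,c,d) \<Rightarrow> (-a,-b,-c,-d))"

definition minv :: "mat2 \<Rightarrow> mat2" where
  "minv A = (case A of (a,b,c,d) \<Rightarrow> (d,-b,-c,a))"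

definition Imat :: mat2 where "Imat = (1,0,0,1)"

definition SL2R :: "mat2 set" where
  "SL2R = {(a,b,c,d). a*d - b*c = 1}"

definition mtrace :: "mat2 \<Rightarrow> real" where
  "mtrace A = (case A of (a,b,c,d) \<Rightarrow> a + d)"

definition lower_left :: "mat2 \<Rightarrow> real" where
  "lower_left A = (case A of (a,b,c,d) \<Rightarrow> c)"

definition mnorm1 :: "mat2 \<Rightarrow> real" where
  "mnorm1 A = (case A of (a,b,c,d) \<Rightarrow> \<bar>a\<bar> + \<bar>b\<bar> + \<bar>c\<bar> + \<bar>d\<bar>)"

definition mob :: "mat2 \<Rightarrow> complex \<Rightarrow> complex" where
  "mob A z = (case A of (a,b,c,d) \<Rightarrow>
     (complex_of_real a * z + complex_of_real b) / (complex_of_real c * z + complex_of_real d))"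

definition Tmat :: "int \<Rightarrow> mat2" where "Tmat n = (1, of_int n, 0, 1)"

definition hdist :: "complex \<Rightarrow> complex \<Rightarrow> real" where
  "hdist z w = arcosh (1 + (cmod (z - w))\<^sup>2 / (2 * Im z * Im w))"

definition upper_half :: "complex set" where "upper_half = {z. Im z > 0}"

definition fuchsian :: "mat2 set \<Rightarrow> bool" where
  "fuchsian G \<longleftrightarrow> G \<subseteq> SL2R \<and> Imat \<in> G \<and> mneg Imat \<in> G
     \<and> (\<forall>A\<in>G. \<forall>B\<in>G. mmult A B \<in> G) \<and> (\<forall>A\<in>G. minv A \<in> G)
     \<and> (\<forall>r. finite {A\<in>G. mnorm1 A \<le> r})"

definition torsion_free :: "mat2 set \<Rightarrow> bool" where
  "torsion_free G \<longleftrightarrow> (\<forall>A\<in>G. (\<exists>w\<in>upper_half. mob A w = w) \<longrightarrow> A = Imat \<or> A = mneg Imat)"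

definition parabolic :: "mat2 \<Rightarrow> bool" where
  "parabolic A \<longleftrightarrow> \<bar>mtrace A\<bar> = 2 \<and> A \<noteq> Imat \<and> A \<noteq> mneg Imat"

definition Gamma_inf :: "mat2 set" where
  "Gamma_inf = {M. \<exists>n::int. M = Tmat n \<or> M = mneg (Tmat n)}"

definition dirichlet_domain :: "mat2 set \<Rightarrow> complex \<Rightarrow> complex set" where
  "dirichlet_domain G p = {w\<in>upper_half. \<forall>A\<in>G. hdist w p \<le> hdist w (mob A p)}"

definition hyp_area :: "complex set \<Rightarrow> ennreal" where
  "hyp_area S = (\<integral>\<^sup>+ w. indicator S w * ennreal (1 / (Im w)\<^sup>2) \<partial>lborel)"

text \<open>G uniformizes a hyperbolic surface of genus g with exactly one puncture, normalized
  so that the stabilizer of the cusp at infinity is generated by z \<mapsto> z+1.\<close>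
definition normalized_once_punctured :: "nat \<Rightarrow> mat2 set \<Rightarrow> bool" where
  "normalized_once_punctured g G \<longleftrightarrow>
     fuchsian G \<and> torsion_free G
     \<and> Tmat 1 \<in> G
     \<and> (\<forall>A\<in>G. lower_left A = 0 \<longrightarrow> A \<in> Gamma_inf)
     \<and> (\<forall>A\<in>G. parabolic A \<longrightarrow> (\<exists>S\<in>G. \<exists>M\<in>Gamma_inf. mmult A S = mmult S M))
     \<and> hyp_area (dirichlet_domain G (2 * \<i>)) = ennreal (2 * pi * (2 * real g - 1))"

definition coset_classes :: "mat2 set \<Rightarrow> mat2 set set" where
  "coset_classes G = (\<lambda>\<delta>. (\<lambda>M. mmult M \<delta>) ` Gamma_inf) ` G"

definition canon_pt :: "complex \<Rightarrow> mat2 set \<Rightarrow> complex" where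
  "canon_pt z C = (THE w. \<exists>\<delta>\<in>C. w = mob \<delta> z \<and> - 1/2 \<le> Re w \<and> Re w < 1/2)"

definition count_set :: "mat2 set \<Rightarrow> complex \<Rightarrow> real \<Rightarrow> mat2 set set" where
  "count_set G z t = {C \<in> coset_classes G. hdist \<i> (canon_pt z C) \<le> t}"

definition Pi_count :: "mat2 set \<Rightarrow> complex \<Rightarrow> real \<Rightarrow> nat" where
  "Pi_count G z t = card (count_set G z t)"

end

theory Submission
  imports Defs
begin


lemma mmult_assoc: "mmult (mmult A B) C = mmult A (mmult B C)"
  by (cases A; cases B; cases C) (simp add: mmult_def algebra_simps)

lemma minv_mult: "A \<in> SL2R \<Longrightarrow> mmult (minv A) A = Imat"
  by (cases A) (auto simp: mmult_def minv_def Imat_def SL2R_def algebra_simps)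

lemma mult_minv: "A \<in> SL2R \<Longrightarrow> mmult A (minv A) = Imat"
  by (cases A) (auto simp: mmult_def minv_def Imat_def SL2R_def algebra_simps)

lemma mmult_I [simp]: "mmult Imat A = A" "mmult A Imat = A"
  by (cases A; simp add: mmult_def Imat_def)+

lemma Gamma_inf_mult: "M \<in> Gamma_inf \<Longrightarrow> N \<in> Gamma_inf \<Longrightarrow> mmult M N \<in> Gamma_inf"
  unfolding Gamma_inf_def
  apply clarify
  subgoal for n m
    apply (rule exI[of _ "n+m"])
    by (auto simp: mmult_def Tmat_def mneg_def)
  done

lemma Gamma_inf_inv: "M \<in> Gamma_inf \<Longrightarrow> minv M \<in> Gamma_inf"
  unfolding Gamma_inf_def
  apply clarify
  subgoal for n
    apply (rule exI[of _ "-n"])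
    by (auto simp: minv_def Tmat_def mneg_def)
  done

lemma Gamma_inf_SL: "M \<in> Gamma_inf \<Longrightarrow> M \<in> SL2R"
  unfolding Gamma_inf_def by (auto simp: SL2R_def Tmat_def mneg_def)

lemma coset_eq:
  assumes "M \<in> Gamma_inf"
  shows "(\<lambda>N. mmult N (mmult M d)) ` Gamma_inf = (\<lambda>N. mmult N d) ` Gamma_inf"
proof
  show "(\<lambda>N. mmult N (mmult M d)) ` Gamma_inf \<subseteq> (\<lambda>N. mmult N d) ` Gamma_inf"
  proof
    fix x assume "x \<in> (\<lambda>N. mmult N (mmult M d)) ` Gamma_inf"
    then obtain N where N: "N \<in> Gamma_inf" "x = mmult (mmult N M) d" by (auto simp: mmult_assoc)
    then show "x \<in> (\<lambda>N. mmult N d) ` Gamma_inf" using assms Gamma_inf_mult by blast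
  qed
next
  show "(\<lambda>N. mmult N d) ` Gamma_inf \<subseteq> (\<lambda>N. mmult N (mmult M d)) ` Gamma_inf"
  proof
    fix x assume "x \<in> (\<lambda>N. mmult N d) ` Gamma_inf"
    then obtain N where N: "N \<in> Gamma_inf" "x = mmult N d" by auto
    have "x = mmult (mmult N (minv M)) (mmult M d)"
      using N assms by (simp add: mmult_assoc[symmetric] mmult_assoc[of N] minv_mult Gamma_inf_SL)
    moreover have "mmult N (minv M) \<in> Gamma_inf" using N assms Gamma_inf_mult Gamma_inf_inv by auto
    ultimately show "x \<in> (\<lambda>N. mmult N (mmult M d)) ` Gamma_inf" by blast
  qed
qed



fun shseq :: "mat2 \<Rightarrow> nat \<Rightarrow> mat2" where
  "shseq A 0 = A"
| "shseq A (Suc n) = mmult (mmult (shseq A n) (Tmat 1)) (minv (shseq A n))"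

lemma step_formula:
  assumes "(a,b,c,d) \<in> SL2R"
  shows "mmult (mmult (a,b,c,d) (Tmat 1)) (minv (a,b,c,d)) = (1 - a*c, a^2, -(c^2), 1 + a*c)"
  using assms by (auto simp: mmult_def minv_def Tmat_def SL2R_def algebra_simps power2_eq_square)

lemma shseq_in:
  assumes "fuchsian G" "Tmat 1 \<in> G" "A \<in> G"
  shows "shseq A n \<in> G"
proof (induction n)
  case 0 thus ?case using assms by simp
next
  case (Suc n)
  have cl: "\<forall>A\<in>G. \<forall>B\<in>G. mmult A B \<in> G" "\<forall>A\<in>G. minv A \<in> G"
    using assms(1) unfolding fuchsian_def by blast+
  have "mmult (shseq A n) (Tmat 1) \<in> G" using cl Suc assms(2) by blast
  moreover have "minv (shseq A n) \<in> G" using cl Suc by blast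
  ultimately show ?case using cl by simp
qed

lemma shimizu:
  assumes F: "fuchsian G" and T: "Tmat 1 \<in> G" and AG: "A \<in> G" and c0: "lower_left A \<noteq> 0"
  shows "\<bar>lower_left A\<bar> \<ge> 1"
proof (rule ccontr)
  assume nt: "\<not> \<bar>lower_left A\<bar> \<ge> 1"
  define q where "q = \<bar>lower_left A\<bar>"
  have q0: "0 < q" and q1: "q < 1" using c0 nt by (auto simp: q_def)
  obtain a0 b0 c0' d0 where A: "A = (a0,b0,c0',d0)" by (cases A) auto
  define B where "B = max \<bar>a0\<bar> (1/(1-q))"
  have B1: "B * (1 - q) \<ge> 1" using q1
    by (smt (verit, ccfv_SIG) B_def divide_le_eq max.cobounded2)
  have Bq: "1 + B*q \<le> B" using B1 by (simp add: algebra_simps)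
  have B0: "B \<ge> 0" by (simp add: B_def le_max_iff_disj)
  have SL: "\<And>n. shseq A n \<in> SL2R" using shseq_in[OF F T AG] F unfolding fuchsian_def by blast
  have key: "\<exists>a b c d. shseq A n = (a,b,c,d) \<and> \<bar>c\<bar> = q^(2^n) \<and> \<bar>a\<bar> \<le> B" for n
  proof (induction n)
    case 0
    then show ?case using A by (auto simp: q_def lower_left_def B_def)
  next
    case (Suc n)
    then obtain a b c d where e: "shseq A n = (a,b,c,d)" "\<bar>c\<bar> = q^(2^n)" "\<bar>a\<bar> \<le> B" by blast
    have s: "shseq A (Suc n) = (1 - a*c, a^2, -(c^2), 1 + a*c)"
      using step_formula[of a b c d] SL[of n] e by simp
    have "q^(2^n) \<le> q^1" using q0 q1 by (intro power_decreasing) auto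
    hence qq: "q^(2^n) \<le> q" by simp
    have "\<bar>a*c\<bar> \<le> B*q" unfolding abs_mult using e qq q0 B0 by (metis abs_ge_zero mult_mono)
    hence "\<bar>1 - a*c\<bar> \<le> B" using Bq by linarith
    moreover have "\<bar>-(c^2)\<bar> = q^(2^Suc n)"
    proof -
      have "\<bar>-(c^2)\<bar> = \<bar>c\<bar>^2" by (simp add: power_abs)
      also have "\<dots> = (q^(2^n))^2" using e by simp
      also have "\<dots> = q^(2^Suc n)" by (simp add: power_mult[symmetric] mult.commute)
      finally show ?thesis .
    qed
    ultimately show ?case using s by auto
  qed
  define r where "r = 2*(1+B) + B^2 + 1"
  have sub: "range (\<lambda>n. shseq A (Suc n)) \<subseteq> {M\<in>G. mnorm1 M \<le> r}"
  proof
    fix x assume "x \<in> range (\<lambda>n. shseq A (Suc n))"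
    then obtain n where xn: "x = shseq A (Suc n)" by blast
    obtain a b c d where e: "shseq A n = (a,b,c,d)" "\<bar>c\<bar> = q^(2^n)" "\<bar>a\<bar> \<le> B" using key by blast
    have s: "shseq A (Suc n) = (1 - a*c, a^2, -(c^2), 1 + a*c)"
      using step_formula[of a b c d] SL[of n] e by simp
    have cq: "\<bar>c\<bar> \<le> 1" using e q0 q1 by (metis less_imp_le power_le_one)
    have h1: "\<bar>a*c\<bar> \<le> B" unfolding abs_mult using e cq B0 by (metis abs_ge_zero mult_mono mult.right_neutral)
    have h2: "\<bar>a^2\<bar> \<le> B^2" unfolding power_abs using e by (intro power_mono) auto
    have h3: "\<bar>-(c^2)\<bar> \<le> 1" unfolding abs_minus_cancel power_abs using cq by (intro power_le_one) auto
    have h4: "\<bar>1 - a*c\<bar> \<le> 1 + B" "\<bar>1 + a*c\<bar> \<le> 1 + B" using h1 by linarith+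
    have "mnorm1 (shseq A (Suc n)) = \<bar>1 - a*c\<bar> + \<bar>a^2\<bar> + \<bar>-(c^2)\<bar> + \<bar>1 + a*c\<bar>"
      unfolding s mnorm1_def by simp
    also have "\<dots> \<le> r" unfolding r_def using h2 h3 h4 by (smt (verit))
    finally have "mnorm1 (shseq A (Suc n)) \<le> r" .
    thus "x \<in> {M\<in>G. mnorm1 M \<le> r}" using shseq_in[OF F T AG, of "Suc n"] xn by blast
  qed
  have inj: "inj (\<lambda>n. shseq A (Suc n))"
  proof (rule injI)
    fix m n assume eq: "shseq A (Suc m) = shseq A (Suc n)"
    have ll: "\<bar>lower_left (shseq A k)\<bar> = q^(2^k)" for k
      using key[of k] by (auto simp: lower_left_def)
    have "q^(2^Suc m) = q^(2^Suc n)" using ll[of "Suc m"] ll[of "Suc n"] eq by metis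
    hence "2^Suc m = (2::nat)^Suc n"
    proof -
      assume h: "q^(2^Suc m) = q^(2^Suc n)"
      show ?thesis
      proof (rule ccontr)
        assume "2^Suc m \<noteq> (2::nat)^Suc n"
        hence "2^Suc m < (2::nat)^Suc n \<or> 2^Suc n < (2::nat)^Suc m" by arith
        thus False
        proof
          assume "2^Suc m < (2::nat)^Suc n"
          hence "q^(2^Suc n) < q^(2^Suc m)" using power_strict_decreasing_iff[OF q0 q1] by blast
          thus False using h by simp
        next
          assume "2^Suc n < (2::nat)^Suc m"
          hence "q^(2^Suc m) < q^(2^Suc n)" using power_strict_decreasing_iff[OF q0 q1] by blast
          thus False using h by simp
        qed
      qed
    qed
    thus "m = n" by simp
  qed
  have "finite {M\<in>G. mnorm1 M \<le> r}" using F unfolding fuchsian_def by blast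
  hence "finite (range (\<lambda>n. shseq A (Suc n)))" using sub finite_subset by blast
  hence "finite (UNIV::nat set)" using inj finite_imageD by blast
  thus False by simp
qed



lemma den_nz:
  assumes "(a,b,c,d) \<in> SL2R" "Im z > 0"
  shows "complex_of_real c * z + complex_of_real d \<noteq> 0"
proof
  assume h: "complex_of_real c * z + complex_of_real d = 0"
  hence "Im (complex_of_real c * z + complex_of_real d) = 0" by simp
  hence "c = 0" using assms(2) by simp
  with h have "d = 0" by simp
  with \<open>c = 0\<close> assms(1) show False by (simp add: SL2R_def)
qed

lemma mob_Im:
  assumes "(a,b,c,d) \<in> SL2R" "Im z > 0"
  shows "Im (mob (a,b,c,d) z) = Im z / (cmod (complex_of_real c * z + complex_of_real d))^2"
proof -
  have det: "a*d - b*c = 1" using assms(1) by (simp add: SL2R_def)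
  have "Im (mob (a,b,c,d) z) = (a * Im z * (c * Re z + d) - (a * Re z + b) * (c * Im z)) /
          (cmod (complex_of_real c * z + complex_of_real d))^2"
    unfolding mob_def by (simp add: Im_divide')
  also have "a * Im z * (c * Re z + d) - (a * Re z + b) * (c * Im z) = Im z * (a*d - b*c)"
    by (simp add: algebra_simps)
  finally show ?thesis using det by simp
qed

lemma mob_T:
  assumes nz: "complex_of_real c * z + complex_of_real d \<noteq> 0"
  shows "mob (mmult (Tmat n) (a,b,c,d)) z = mob (a,b,c,d) z + of_int n"
    and "mob (mmult (mneg (Tmat n)) (a,b,c,d)) z = mob (a,b,c,d) z + of_int n"
proof -
  let ?p = "complex_of_real a * z + complex_of_real b"
  let ?q = "complex_of_real c * z + complex_of_real d"
  have e1: "mmult (Tmat n) (a,b,c,d) = (a + of_int n * c, b + of_int n * d, c, d)"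
    by (simp add: mmult_def Tmat_def)
  have e2: "mmult (mneg (Tmat n)) (a,b,c,d) = (-(a + of_int n * c), -(b + of_int n * d), -c, -d)"
    by (simp add: mmult_def Tmat_def mneg_def)
  have num: "complex_of_real (a + of_int n * c) * z + complex_of_real (b + of_int n * d) = ?p + of_int n * ?q"
    by (simp add: algebra_simps)
  have "(?p + of_int n * ?q) / ?q = ?p / ?q + of_int n"
    using nz by (simp add: add_divide_distrib)
  thus "mob (mmult (Tmat n) (a,b,c,d)) z = mob (a,b,c,d) z + of_int n"
    unfolding e1 mob_def prod.case num .
  have num2: "complex_of_real (-(a + of_int n * c)) * z + complex_of_real (-(b + of_int n * d)) = - (?p + of_int n * ?q)"
    by (simp add: algebra_simps)
  have den2: "complex_of_real (-c) * z + complex_of_real (-d) = - ?q" by (simp add: algebra_simps)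
  have "(- (?p + of_int n * ?q)) / (- ?q) = ?p / ?q + of_int n"
    using nz by (simp only: minus_divide_divide) (simp add: add_divide_distrib)
  thus "mob (mmult (mneg (Tmat n)) (a,b,c,d)) z = mob (a,b,c,d) z + of_int n"
    unfolding e2 mob_def prod.case num2 den2 .
qed

lemma mob_trans:
  assumes "(a,b,c,d) \<in> SL2R" "Im z > 0" "M \<in> Gamma_inf"
  shows "\<exists>m::int. mob (mmult M (a,b,c,d)) z = mob (a,b,c,d) z + of_int m"
proof -
  have nz: "complex_of_real c * z + complex_of_real d \<noteq> 0" using den_nz assms by blast
  obtain n where "M = Tmat n \<or> M = mneg (Tmat n)" using assms(3) by (auto simp: Gamma_inf_def)
  thus ?thesis using mob_T[OF nz, of n a b] by blast
qed

lemma canon_Im: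
  assumes SL: "\<delta> \<in> SL2R" and z: "Im z > 0" and C: "C = (\<lambda>M. mmult M \<delta>) ` Gamma_inf"
  shows "Im (canon_pt z C) = Im (mob \<delta> z)"
proof -
  obtain a b c d where d: "\<delta> = (a,b,c,d)" by (cases \<delta>) auto
  define w0 where "w0 = mob \<delta> z"
  define P where "P = (\<lambda>w. \<exists>\<delta>'\<in>C. w = mob \<delta>' z \<and> - 1/2 \<le> Re w \<and> Re w < 1/2)"
  have shape: "\<exists>m::int. w = w0 + of_int m" if "P w" for w
  proof -
    from that obtain \<delta>' where "\<delta>' \<in> C" "w = mob \<delta>' z" unfolding P_def by blast
    then obtain M where "M \<in> Gamma_inf" "w = mob (mmult M \<delta>) z" using C by blast
    thus ?thesis using mob_trans[of a b c d z M] SL z d w0_def by auto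
  qed
  define n0 where "n0 = - \<lfloor>Re w0 + 1/2\<rfloor>"
  have ex: "P (w0 + of_int n0)"
  proof -
    have "Tmat n0 \<in> Gamma_inf" by (auto simp: Gamma_inf_def)
    hence mem: "mmult (Tmat n0) \<delta> \<in> C" using C by blast
    have "mob (mmult (Tmat n0) \<delta>) z = w0 + of_int n0"
      using den_nz[of a b c d z] SL z d mob_T(1) unfolding w0_def by blast
    moreover have "- 1/2 \<le> Re (w0 + of_int n0) \<and> Re (w0 + of_int n0) < 1/2"
      unfolding n0_def by simp linarith
    ultimately show ?thesis unfolding P_def using mem by metis
  qed
  have uniq: "w = w0 + of_int n0" if Pw: "P w" for w
  proof -
    obtain m :: int where m: "w = w0 + of_int m" using shape Pw by blast
    have r: "- 1/2 \<le> Re w \<and> Re w < 1/2" using Pw unfolding P_def by blast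
    have r0: "- 1/2 \<le> Re (w0 + of_int n0) \<and> Re (w0 + of_int n0) < 1/2" using ex unfolding P_def by blast
    have "\<bar>real_of_int (m - n0)\<bar> < 1" using r r0 m by simp
    hence "m = n0" by linarith
    thus ?thesis using m by simp
  qed
  have "\<exists>!w. P w" using ex uniq by blast
  hence "P (THE w. P w)" by (rule theI')
  hence "canon_pt z C = w0 + of_int n0" using uniq unfolding canon_pt_def P_def by blast
  thus ?thesis unfolding w0_def by simp
qed

lemma hdist_Im:
  assumes w: "Im w > 0" and t: "t \<ge> 0" and h: "hdist \<i> w \<le> t"
  shows "Im w \<ge> exp (-t)"
proof (rule ccontr)
  assume "\<not> Im w \<ge> exp (-t)"
  hence lt: "Im w < exp (-t)" by simp
  define v where "v = Im w"
  define X where "X = 1 + (cmod (\<i> - w))\<^sup>2 / (2 * Im \<i> * Im w)"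
  have X1: "X \<ge> 1" unfolding X_def using w by simp
  have "X \<le> cosh t"
  proof (rule ccontr)
    assume "\<not> X \<le> cosh t"
    hence "arcosh (cosh t) < arcosh X" using X1 cosh_real_ge_1[of t] by simp
    thus False using h arcosh_cosh_real[OF t] unfolding hdist_def X_def by simp
  qed
  moreover have "(cmod (\<i> - w))\<^sup>2 \<ge> (1 - v)\<^sup>2"
  proof -
    have "\<bar>Im (\<i> - w)\<bar> \<le> cmod (\<i> - w)" by (rule abs_Im_le_cmod)
    hence "\<bar>1 - v\<bar> \<le> cmod (\<i> - w)" unfolding v_def by simp
    thus ?thesis by (metis abs_ge_zero power_mono power2_abs)
  qed
  ultimately have A: "1 + (1 - v)\<^sup>2 / (2 * v) \<le> (exp t + exp (-t)) / 2"
  proof -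
    assume a1: "X \<le> cosh t" and a2: "(cmod (\<i> - w))\<^sup>2 \<ge> (1 - v)\<^sup>2"
    have "(1 - v)\<^sup>2 / (2 * v) \<le> (cmod (\<i> - w))\<^sup>2 / (2 * v)"
      using a2 w unfolding v_def by (intro divide_right_mono) auto
    also have "1 + \<dots> = X" unfolding X_def v_def by simp
    finally have "1 + (1 - v)\<^sup>2 / (2 * v) \<le> X" by simp
    thus ?thesis using a1 by (simp add: cosh_field_def)
  qed
  have B: "1 + (1 - v)\<^sup>2 / (2 * v) = (v + 1/v) / 2"
    using w unfolding v_def by (simp add: field_simps power2_eq_square)
  have "(v + 1/v) / 2 \<le> (exp t + exp (-t)) / 2" using A unfolding B .
  hence le: "v + 1/v \<le> exp t + exp (-t)" by simp
  define a where "a = exp (-t)"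
  have a0: "0 < a" and a1: "a \<le> 1" using t by (auto simp: a_def)
  have v0: "0 < v" and va: "v < a" using w lt by (auto simp: v_def a_def)
  have "v * a \<le> v" using a1 v0 by (simp add: mult_left_le)
  hence va1: "v * a < 1" using va a1 by linarith
  have "1 < 1 / (v * a)" using va1 v0 a0 by (simp add: less_divide_eq_1_pos)
  hence "(v - a) * (1 - 1 / (v * a)) > 0" using va
    by (intro mult_neg_neg) auto
  moreover have "(v - a) * (1 - 1 / (v * a)) = (v + 1/v) - (a + 1/a)" using v0 a0
    by (simp add: field_simps)
  moreover have "1/a = exp t" unfolding a_def by (simp add: exp_minus divide_inverse)
  ultimately show False using le unfolding a_def by linarith
qed

lemma Im_cnj_Arg: "Im (cnj u * v) = cmod u * cmod v * sin (Arg v - Arg u)"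
proof -
  have "Im (cnj u * v) = Re u * Im v - Im u * Re v" by simp
  also have "\<dots> = Re (rcis (cmod u) (Arg u)) * Im (rcis (cmod v) (Arg v))
                  - Im (rcis (cmod u) (Arg u)) * Re (rcis (cmod v) (Arg v))"
    by (simp only: rcis_cmod_Arg)
  also have "\<dots> = cmod u * cmod v * sin (Arg v - Arg u)"
    by (simp add: sin_diff algebra_simps)
  finally show ?thesis .
qed



definition bw :: "complex \<Rightarrow> mat2 \<Rightarrow> complex" where
  "bw z A = (case A of (a,b,c,d) \<Rightarrow> complex_of_real c * z + complex_of_real d)"

definition nw :: "complex \<Rightarrow> mat2 \<Rightarrow> complex" where
  "nw z A = (case A of (a,b,c,d) \<Rightarrow> if c > 0 \<or> (c = 0 \<and> d > 0) then bw z A else - bw z A)"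

lemma nw_props:
  assumes SL: "(a,b,c,d) \<in> SL2R" and z: "Im z > 0"
  shows "nw z (a,b,c,d) \<noteq> 0" "0 \<le> Arg (nw z (a,b,c,d))" "Arg (nw z (a,b,c,d)) < pi"
    "cmod (nw z (a,b,c,d)) = cmod (bw z (a,b,c,d))"
proof -
  have nz: "bw z (a,b,c,d) \<noteq> 0" using den_nz[OF SL z] by (simp add: bw_def)
  show "nw z (a,b,c,d) \<noteq> 0" using nz by (simp add: nw_def)
  show "cmod (nw z (a,b,c,d)) = cmod (bw z (a,b,c,d))" by (simp add: nw_def)
  have cd: "\<not> (c = 0 \<and> d = 0)" using SL by (auto simp: SL2R_def)
  have im: "Im (nw z (a,b,c,d)) \<ge> 0 \<and> (Im (nw z (a,b,c,d)) = 0 \<longrightarrow> Re (nw z (a,b,c,d)) > 0)"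
  proof (cases "c > 0 \<or> (c = 0 \<and> d > 0)")
    case True
    then show ?thesis using z by (auto simp: nw_def bw_def)
  next
    case False
    hence "c < 0 \<or> (c = 0 \<and> d < 0)" using cd by auto
    then show ?thesis using z False by (auto simp: nw_def bw_def mult_neg_pos mult_nonpos_nonneg)
  qed
  show "0 \<le> Arg (nw z (a,b,c,d))" using im Arg_less_0 by blast
  have "Arg (nw z (a,b,c,d)) \<noteq> pi" using im Arg_eq_pi by force
  thus "Arg (nw z (a,b,c,d)) < pi" using Arg_le_pi by (meson order_le_less)
qed

lemma Im_cnj_nw:
  shows "\<bar>Im (cnj (nw z (a1,b1,c1,d1)) * nw z (a2,b2,c2,d2))\<bar> = \<bar>Im z\<bar> * \<bar>c2*d1 - c1*d2\<bar>"
proof -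
  have "Im (cnj (bw z (a1,b1,c1,d1)) * bw z (a2,b2,c2,d2)) = Im z * (c2*d1 - c1*d2)"
    by (simp add: bw_def algebra_simps)
  moreover have "\<bar>Im (cnj (nw z (a1,b1,c1,d1)) * nw z (a2,b2,c2,d2))\<bar>
     = \<bar>Im (cnj (bw z (a1,b1,c1,d1)) * bw z (a2,b2,c2,d2))\<bar>"
    by (simp add: nw_def abs_minus_commute)
  ultimately show ?thesis by (simp add: abs_mult)
qed



theorem proposition2p1:
  shows "\<exists>U>0. \<forall>(g::nat) (G::mat2 set) (z::complex) (t::real).
           normalized_once_punctured g G \<and> 0 < Im z \<and> Im z < 1 \<and> 0 \<le> t \<longrightarrow>
           finite (count_set G z t) \<and> real (Pi_count G z t) \<le> U * exp t"
proof (rule exI[of _ "pi + 1"], intro conjI allI impI)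
  show "0 < pi + 1" using pi_gt_zero by linarith
  fix g G z t
  assume H: "normalized_once_punctured g G \<and> 0 < Im z \<and> Im z < 1 \<and> 0 \<le> (t::real)"
  have F: "fuchsian G" and T1: "Tmat 1 \<in> G" and LL: "\<forall>A\<in>G. lower_left A = 0 \<longrightarrow> A \<in> Gamma_inf"
    using H unfolding normalized_once_punctured_def by blast+
  have z0: "0 < Im z" and t0: "0 \<le> t" using H by blast+
  have SLG: "\<And>A. A \<in> G \<Longrightarrow> A \<in> SL2R" using F unfolding fuchsian_def by blast
  have clm: "\<And>A B. A \<in> G \<Longrightarrow> B \<in> G \<Longrightarrow> mmult A B \<in> G" using F unfolding fuchsian_def by blast
  have cli: "\<And>A. A \<in> G \<Longrightarrow> minv A \<in> G" using F unfolding fuchsian_def by blast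
  define y where "y = Im z"
  define \<theta> where "\<theta> = exp (-t)"
  define X where "X = y * exp t"
  have y0: "y > 0" using z0 by (simp add: y_def)
  have th0: "\<theta> > 0" by (simp add: \<theta>_def)
  have X0: "X > 0" using y0 by (simp add: X_def)
  have Xth: "X * \<theta> = y" by (simp add: X_def \<theta>_def mult_exp_exp)
  define cs where "cs = count_set G z t"
  define rep where "rep C = (SOME \<delta>. \<delta> \<in> G \<and> C = (\<lambda>M. mmult M \<delta>) ` Gamma_inf)" for C
  have rep: "rep C \<in> G \<and> C = (\<lambda>M. mmult M (rep C)) ` Gamma_inf" if "C \<in> cs" for C
  proof -
    have "\<exists>\<delta>. \<delta> \<in> G \<and> C = (\<lambda>M. mmult M \<delta>) ` Gamma_inf"
      using that unfolding cs_def count_set_def coset_classes_def by blast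
    thus ?thesis unfolding rep_def by (rule someI_ex)
  qed
  have bound: "(cmod (nw z (rep C)))\<^sup>2 \<le> X" if C: "C \<in> cs" for C
  proof -
    obtain a b c d where dd: "rep C = (a,b,c,d)" by (cases "rep C") auto
    have SL: "(a,b,c,d) \<in> SL2R" using rep[OF C] SLG dd by metis
    have nz: "complex_of_real c * z + complex_of_real d \<noteq> 0" using den_nz[OF SL z0] .
    let ?q = "(cmod (complex_of_real c * z + complex_of_real d))\<^sup>2"
    have q0: "?q > 0" using nz by simp
    have ci: "Im (canon_pt z C) = y / ?q"
      using canon_Im[OF SL z0, of C] rep[OF C] dd mob_Im[OF SL z0] by (simp add: y_def)
    have "Im (canon_pt z C) > 0" using ci y0 q0 by simp
    moreover have "hdist \<i> (canon_pt z C) \<le> t" using C unfolding cs_def count_set_def by blast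
    ultimately have "Im (canon_pt z C) \<ge> \<theta>" using hdist_Im t0 unfolding \<theta>_def by blast
    hence "\<theta> \<le> y / ?q" using ci by simp
    hence "\<theta> * ?q \<le> y" using q0 by (simp add: field_simps)
    hence "?q \<le> y / \<theta>" using th0 by (simp add: field_simps)
    also have "y / \<theta> = X" unfolding X_def \<theta>_def by (simp add: exp_minus divide_inverse)
    finally have "?q \<le> X" .
    thus ?thesis using nw_props(4)[OF SL z0] dd by (simp add: bw_def)
  qed
  have argp: "0 \<le> Arg (nw z (rep C)) \<and> Arg (nw z (rep C)) < pi" if C: "C \<in> cs" for C
  proof -
    obtain a b c d where dd: "rep C = (a,b,c,d)" by (cases "rep C") auto
    have SL: "(a,b,c,d) \<in> SL2R" using rep[OF C] SLG dd by metis
    show ?thesis using nw_props(2,3)[OF SL z0] dd by simp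
  qed
  define f where "f C = nat \<lfloor>Arg (nw z (rep C)) / \<theta>\<rfloor>" for C
  define N where "N = nat \<lfloor>pi / \<theta>\<rfloor>"
  have img: "f ` cs \<subseteq> {..N}"
  proof
    fix k assume "k \<in> f ` cs"
    then obtain C where C: "C \<in> cs" "k = f C" by blast
    have "Arg (nw z (rep C)) / \<theta> \<le> pi / \<theta>" using argp[OF C(1)] th0 by (simp add: divide_right_mono)
    hence "\<lfloor>Arg (nw z (rep C)) / \<theta>\<rfloor> \<le> \<lfloor>pi / \<theta>\<rfloor>" by (rule floor_mono)
    thus "k \<in> {..N}" unfolding C(2) f_def N_def by simp
  qed
  have inj: "inj_on f cs"
  proof (rule inj_onI)
    fix C1 C2 assume C1: "C1 \<in> cs" and C2: "C2 \<in> cs" and feq: "f C1 = f C2"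
    obtain a1 b1 c1 d1 where d1: "rep C1 = (a1,b1,c1,d1)" by (cases "rep C1") auto
    obtain a2 b2 c2 d2 where d2: "rep C2 = (a2,b2,c2,d2)" by (cases "rep C2") auto
    define n1 where "n1 = nw z (rep C1)"
    define n2 where "n2 = nw z (rep C2)"
    define \<alpha>1 where "\<alpha>1 = Arg n1 / \<theta>"
    define \<alpha>2 where "\<alpha>2 = Arg n2 / \<theta>"
    have a1p: "\<alpha>1 \<ge> 0" using argp[OF C1] th0 unfolding \<alpha>1_def n1_def by simp
    have a2p: "\<alpha>2 \<ge> 0" using argp[OF C2] th0 unfolding \<alpha>2_def n2_def by simp
    have "nat \<lfloor>\<alpha>1\<rfloor> = nat \<lfloor>\<alpha>2\<rfloor>" using feq unfolding f_def \<alpha>1_def \<alpha>2_def n1_def n2_def .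
    moreover have "0 \<le> \<lfloor>\<alpha>1\<rfloor>" "0 \<le> \<lfloor>\<alpha>2\<rfloor>" using a1p a2p by simp_all
    ultimately have "\<lfloor>\<alpha>1\<rfloor> = \<lfloor>\<alpha>2\<rfloor>" by (simp add: eq_nat_nat_iff)
    hence "\<bar>\<alpha>1 - \<alpha>2\<bar> < 1" by linarith
    hence "\<bar>\<alpha>1 - \<alpha>2\<bar> * \<theta> < \<theta>" using th0 by simp
    moreover have "\<bar>\<alpha>1 - \<alpha>2\<bar> * \<theta> = \<bar>Arg n2 - Arg n1\<bar>"
    proof -
      have "(\<alpha>1 - \<alpha>2) * \<theta> = Arg n1 - Arg n2" unfolding \<alpha>1_def \<alpha>2_def using th0
        by (simp add: left_diff_distrib)
      hence "\<bar>\<alpha>1 - \<alpha>2\<bar> * \<bar>\<theta>\<bar> = \<bar>Arg n1 - Arg n2\<bar>" by (metis abs_mult)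
      thus ?thesis using th0 by (simp add: abs_minus_commute)
    qed
    ultimately have dl: "\<bar>Arg n2 - Arg n1\<bar> < \<theta>" by simp
    have b1: "(cmod n1)\<^sup>2 \<le> X" using bound[OF C1] unfolding n1_def .
    have b2: "(cmod n2)\<^sup>2 \<le> X" using bound[OF C2] unfolding n2_def .
    have "(cmod n1)\<^sup>2 * (cmod n2)\<^sup>2 \<le> X * X"
      by (rule mult_mono[OF b1 b2]) (use X0 in simp_all)
    hence "(cmod n1 * cmod n2)\<^sup>2 \<le> X\<^sup>2" by (simp only: power_mult_distrib power2_eq_square[of X])
    hence pm: "cmod n1 * cmod n2 \<le> X" by (rule power2_le_imp_le) (use X0 in simp)
    have "\<bar>Im (cnj n1 * n2)\<bar> = cmod n1 * cmod n2 * \<bar>sin (Arg n2 - Arg n1)\<bar>"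
      unfolding Im_cnj_Arg abs_mult by simp
    also have "\<dots> \<le> X * \<bar>Arg n2 - Arg n1\<bar>"
      by (rule mult_mono[OF pm abs_sin_x_le_abs_x]) (use X0 in simp_all)
    also have "\<dots> < X * \<theta>" by (rule mult_strict_left_mono[OF dl X0])
    finally have lt: "\<bar>Im (cnj n1 * n2)\<bar> < X * \<theta>" .
    have eq: "\<bar>Im (cnj n1 * n2)\<bar> = y * \<bar>c2*d1 - c1*d2\<bar>"
      unfolding n1_def n2_def d1 d2 Im_cnj_nw y_def using z0 by simp
    have "y * \<bar>c2*d1 - c1*d2\<bar> < y * 1" using lt unfolding eq Xth by simp
    hence small: "\<bar>c2*d1 - c1*d2\<bar> < 1" using mult_less_cancel_left_pos[OF y0] by blast
    define M where "M = mmult (rep C2) (minv (rep C1))"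
    have G1: "rep C1 \<in> G" and G2: "rep C2 \<in> G" using rep C1 C2 by blast+
    have MG: "M \<in> G" unfolding M_def using clm cli G1 G2 by blast
    have llM: "lower_left M = c2*d1 - c1*d2"
      unfolding M_def d1 d2 by (simp add: mmult_def minv_def lower_left_def algebra_simps)
    have "lower_left M = 0"
    proof (rule ccontr)
      assume "lower_left M \<noteq> 0"
      hence "\<bar>lower_left M\<bar> \<ge> 1" using shimizu[OF F T1 MG] by blast
      thus False using small llM by simp
    qed
    hence MI: "M \<in> Gamma_inf" using LL MG by blast
    have h: "mmult M (rep C1) = rep C2"
      unfolding M_def using SLG[OF G1] by (simp add: mmult_assoc minv_mult)
    have "C2 = (\<lambda>N. mmult N (rep C2)) ` Gamma_inf" by (rule conjunct2[OF rep[OF C2]])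
    also have "\<dots> = (\<lambda>N. mmult N (mmult M (rep C1))) ` Gamma_inf" by (simp only: h)
    also have "\<dots> = (\<lambda>N. mmult N (rep C1)) ` Gamma_inf" by (rule coset_eq[OF MI])
    also have "\<dots> = C1" by (rule conjunct2[OF rep[OF C1], symmetric])
    finally show "C1 = C2" by (rule sym)
  qed
  have fin: "finite cs"
    using inj img finite_subset[OF img] finite_imageD by blast
  have "card cs = card (f ` cs)" using card_image[OF inj] by simp
  also have "\<dots> \<le> card {..N}" using img by (intro card_mono) auto
  also have "\<dots> = N + 1" by simp
  finally have cb: "real (card cs) \<le> real N + 1" by linarith
  have "real N \<le> pi / \<theta>" unfolding N_def using th0 pi_gt_zero
    by (simp add: of_nat_nat) 
  also have "pi / \<theta> = pi * exp t" unfolding \<theta>_def by (simp add: exp_minus divide_inverse)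
  finally have "real (card cs) \<le> pi * exp t + 1" using cb by linarith
  also have "\<dots> \<le> (pi + 1) * exp t" using t0 by (simp add: algebra_simps)
  finally show "real (Pi_count G z t) \<le> (pi + 1) * exp t" unfolding Pi_count_def cs_def .
  show "finite (count_set G z t)" using fin unfolding cs_def .
qed

end
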